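(* For every integer $n\ge 1$, $r(2,n)=(2^n+1)(2^{n-1}+1)/3$.
   Context: For $n\ge 1$, $r(2,n)$ denotes the number of orbits of the left action of $\mathrm{SL}(2,\mathbb{Z})$ on $(\mathbb{Z}_2\times\mathbb{Z}_2)^n$, where elements of $(\mathbb{Z}_2\times\mathbb{Z}_2)^n$ are viewed as $2\times n$ matrices over $\mathbb{Z}_2$ and a matrix in $\mathrm{SL}(2,\mathbb{Z})$ acts by left matrix multiplication with entries reduced modulo $2$. *)

theory Defs
  imports Complex_Main
begin

text \<open>Elements of (Z_2 x Z_2)^n viewed as 2 x n matrices over Z_2:
  functions M :: nat => nat => int with entries in {0,1} at positions (i,j), i<2, j<n,
  and 0 outside (extensional representation).\<close>
definition Z2mats :: "nat \<Rightarrow> (nat \<Rightarrow> nat \<Rightarrow> int) set" where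
  "Z2mats n = {M. (\<forall>i j. i < 2 \<and> j < n \<longrightarrow> M i j \<in> {0, 1})
                 \<and> (\<forall>i j. \<not> (i < 2 \<and> j < n) \<longrightarrow> M i j = 0)}"

definition SL2Z :: "(nat \<Rightarrow> nat \<Rightarrow> int) set" where
  "SL2Z = {g. g 0 0 * g 1 1 - g 0 1 * g 1 0 = 1
              \<and> (\<forall>i j. \<not> (i < 2 \<and> j < 2) \<longrightarrow> g i j = 0)}"

definition act :: "nat \<Rightarrow> (nat \<Rightarrow> nat \<Rightarrow> int) \<Rightarrow> (nat \<Rightarrow> nat \<Rightarrow> int) \<Rightarrow> (nat \<Rightarrow> nat \<Rightarrow> int)" where
  "act n g M = (\<lambda>i j. if i < 2 \<and> j < n then (\<Sum>k<2. g i k * M k j) mod 2 else 0)"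

definition orbit_rel :: "nat \<Rightarrow> ((nat \<Rightarrow> nat \<Rightarrow> int) \<times> (nat \<Rightarrow> nat \<Rightarrow> int)) set" where
  "orbit_rel n = {(M, N). M \<in> Z2mats n \<and> N \<in> Z2mats n \<and> (\<exists>g \<in> SL2Z. act n g M = N)}"

definition r2 :: "nat \<Rightarrow> nat" where
  "r2 n = card (Z2mats n // orbit_rel n)"

end

theory Submission
  imports Defs "HOL-Algebra.Group_Action" "HOL-Library.FuncSet"
begin

definition mk :: "int \<Rightarrow> int \<Rightarrow> int \<Rightarrow> int \<Rightarrow> (nat \<Rightarrow> nat \<Rightarrow> int)" where
  "mk a b c d = (\<lambda>i j. if i=0 \<and> j=0 then a else if i=0 \<and> j=1 then b else if i=1 \<and> j=0 then c else if i=1 \<and> j=1 then d else 0)"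

definition mmul :: "(nat \<Rightarrow> nat \<Rightarrow> int) \<Rightarrow> (nat \<Rightarrow> nat \<Rightarrow> int) \<Rightarrow> (nat \<Rightarrow> nat \<Rightarrow> int)" where
  "mmul g h = (\<lambda>i j. if i<2 \<and> j<2 then (\<Sum>k<2. g i k * h k j) mod 2 else 0)"

lemma sum2: "(\<Sum>k<(2::nat). f k) = f 0 + (f 1 :: int)"
  by (simp add: numeral_2_eq_2)

lemma mk_inject[simp]: "(mk a b c d = mk a' b' c' d') \<longleftrightarrow> a=a' \<and> b=b' \<and> c=c' \<and> d=d'"
proof
  assume H: "mk a b c d = mk a' b' c' d'"
  have "mk a b c d 0 0 = mk a' b' c' d' 0 0" "mk a b c d 0 1 = mk a' b' c' d' 0 1"
       "mk a b c d 1 0 = mk a' b' c' d' 1 0" "mk a b c d 1 1 = mk a' b' c' d' 1 1" using H by auto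
  then show "a=a' \<and> b=b' \<and> c=c' \<and> d=d'" by (simp add: mk_def)
qed simp

lemma mmul_mk: "mmul (mk a b c d) (mk e f g h) = mk ((a*e+b*g) mod 2) ((a*f+b*h) mod 2) ((c*e+d*g) mod 2) ((c*f+d*h) mod 2)"
proof (rule ext, rule ext)
  fix i j :: nat
  have "i = 0 \<or> i = 1 \<or> i \<ge> 2" "j = 0 \<or> j = 1 \<or> j \<ge> 2" by auto
  then show "mmul (mk a b c d) (mk e f g h) i j = mk ((a*e+b*g) mod 2) ((a*f+b*h) mod 2) ((c*e+d*g) mod 2) ((c*f+d*h) mod 2) i j"
    by (elim disjE) (simp_all add: mmul_def mk_def sum2)
qed

lemma mod2_lin: "((g0::int)*(X mod 2) + g1*(Y mod 2)) mod 2 = (g0*X+g1*Y) mod 2"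
proof -
  have "((g0::int)*(X mod 2) + g1*(Y mod 2)) mod 2 = ((g0*(X mod 2)) mod 2 + (g1*(Y mod 2)) mod 2) mod 2"
    by (rule mod_add_eq[symmetric])
  also have "\<dots> = ((g0*X) mod 2 + (g1*Y) mod 2) mod 2" by (simp only: mod_mult_right_eq)
  also have "\<dots> = (g0*X+g1*Y) mod 2" by (rule mod_add_eq)
  finally show ?thesis .
qed

lemma mod2_lin': "(((X::int) mod 2)*g0 + (Y mod 2)*g1) mod 2 = (X*g0+Y*g1) mod 2"
  using mod2_lin[of g0 X g1 Y] by (simp add: mult.commute)

lemma key_mod: "((g0::int)*((h00*m0 + h01*m1) mod 2) + g1*((h10*m0+h11*m1) mod 2)) mod 2
   = (((g0*h00+g1*h10) mod 2)*m0 + ((g0*h01+g1*h11) mod 2)*m1) mod 2"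
proof -
  have "((g0::int)*((h00*m0 + h01*m1) mod 2) + g1*((h10*m0+h11*m1) mod 2)) mod 2
       = (g0*(h00*m0 + h01*m1) + g1*(h10*m0+h11*m1)) mod 2"
    by (rule mod2_lin)
  also have "\<dots> = ((g0*h00+g1*h10)*m0 + (g0*h01+g1*h11)*m1) mod 2"
    by (simp add: algebra_simps)
  also have "\<dots> = (((g0*h00+g1*h10) mod 2)*m0 + ((g0*h01+g1*h11) mod 2)*m1) mod 2"
    by (rule mod2_lin'[symmetric])
  finally show ?thesis .
qed

definition C6 :: "(nat \<Rightarrow> nat \<Rightarrow> int) set" where
  "C6 = {mk 1 0 0 1, mk 0 1 1 0, mk 1 1 0 1, mk 1 0 1 1, mk 1 1 1 0, mk 0 1 1 1}"

definition G6 :: "(nat \<Rightarrow> nat \<Rightarrow> int) monoid" where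
  "G6 = \<lparr>carrier = C6, mult = mmul, one = mk 1 0 0 1\<rparr>"

lemma C6_assoc: "mmul (mmul x y) z = mmul x (mmul y z)"
proof (rule ext, rule ext)
  fix i j
  show "mmul (mmul x y) z i j = mmul x (mmul y z) i j"
  proof (cases "i<2 \<and> j<2")
    case True
    then show ?thesis unfolding mmul_def using True
      by (simp only: sum2 if_True if_False simp_thms zero_less_numeral one_less_numeral_iff semiring_norm key_mod)
  qed (auto simp add: mmul_def)
qed

lemma C6_closed: "x \<in> C6 \<Longrightarrow> y \<in> C6 \<Longrightarrow> mmul x y \<in> C6"
  unfolding C6_def by (elim insertE emptyE; simp add: mmul_mk)

lemma C6_inv: "x \<in> C6 \<Longrightarrow> \<exists>y\<in>C6. mmul y x = mk 1 0 0 1 \<and> mmul x y = mk 1 0 0 1"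
  unfolding C6_def by (elim insertE emptyE; simp add: mmul_mk)

lemma C6_one: "x \<in> C6 \<Longrightarrow> mmul (mk 1 0 0 1) x = x"
  unfolding C6_def by (elim insertE emptyE; simp add: mmul_mk)

lemma group_G6: "group G6"
proof (rule groupI)
  show "\<one>\<^bsub>G6\<^esub> \<in> carrier G6" by (simp add: G6_def C6_def)
  show "x \<otimes>\<^bsub>G6\<^esub> y \<in> carrier G6" if "x \<in> carrier G6" "y \<in> carrier G6" for x y
    using that C6_closed by (simp add: G6_def)
  show "x \<otimes>\<^bsub>G6\<^esub> y \<otimes>\<^bsub>G6\<^esub> z = x \<otimes>\<^bsub>G6\<^esub> (y \<otimes>\<^bsub>G6\<^esub> z)" for x y z
    by (simp add: G6_def C6_assoc)
  show "\<one>\<^bsub>G6\<^esub> \<otimes>\<^bsub>G6\<^esub> x = x" if "x \<in> carrier G6" for x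
    using that C6_one by (simp add: G6_def)
  show "\<exists>y\<in>carrier G6. y \<otimes>\<^bsub>G6\<^esub> x = \<one>\<^bsub>G6\<^esub>" if "x \<in> carrier G6" for x
    using that C6_inv by (auto simp add: G6_def)
qed

lemma act_comp: "act n g (act n h M) = act n (mmul g h) M"
proof (rule ext, rule ext)
  fix i j
  show "act n g (act n h M) i j = act n (mmul g h) M i j"
  proof (cases "i<2 \<and> j<n")
    case True
    then show ?thesis unfolding act_def mmul_def using True
      by (simp only: sum2 if_True if_False simp_thms zero_less_numeral one_less_numeral_iff semiring_norm key_mod)
  qed (auto simp add: act_def)
qed

lemma Z2matsD: "M \<in> Z2mats n \<Longrightarrow> i < 2 \<Longrightarrow> j < n \<Longrightarrow> M i j = 0 \<or> M i j = 1"
  "M \<in> Z2mats n \<Longrightarrow> \<not> (i < 2 \<and> j < n) \<Longrightarrow> M i j = 0"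
  by (auto simp: Z2mats_def)

lemma act_one: "M \<in> Z2mats n \<Longrightarrow> act n (mk 1 0 0 1) M = M"
proof (rule ext, rule ext)
  fix i j assume M: "M \<in> Z2mats n"
  show "act n (mk 1 0 0 1) M i j = M i j"
  proof (cases "i<2 \<and> j<n")
    case True
    then have "i = 0 \<or> i = 1" by auto
    moreover have "M i j = 0 \<or> M i j = 1" using Z2matsD(1)[OF M] True by auto
    then have "M i j mod 2 = M i j" by auto
    ultimately show ?thesis using True by (auto simp: act_def mk_def sum2)
  qed (auto simp add: act_def Z2matsD(2)[OF M])
qed

lemma act_closed: "act n g M \<in> Z2mats n"
proof -
  have "x mod 2 = 0 \<or> x mod 2 = 1" for x :: int by auto
  then show ?thesis by (auto simp: Z2mats_def act_def)
qed

lemma act_cong_mod: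
  assumes "\<And>i k. i < 2 \<Longrightarrow> k < 2 \<Longrightarrow> g i k mod 2 = g' i k mod 2"
  shows "act n g = act n g'"
proof (rule ext, rule ext, rule ext)
  fix M i j
  show "act n g M i j = act n g' M i j"
  proof (cases "i<2 \<and> j<n")
    case True
    have "(g i 0 * M 0 j + g i 1 * M 1 j) mod 2 = ((g i 0 mod 2) * M 0 j + (g i 1 mod 2) * M 1 j) mod 2"
      by (rule mod2_lin'[symmetric])
    also have "\<dots> = ((g' i 0 mod 2) * M 0 j + (g' i 1 mod 2) * M 1 j) mod 2"
      using assms True by simp
    also have "\<dots> = (g' i 0 * M 0 j + g' i 1 * M 1 j) mod 2"
      by (rule mod2_lin')
    finally show ?thesis using True by (simp add: act_def sum2)
  qed (auto simp add: act_def)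
qed

definition phi :: "nat \<Rightarrow> (nat \<Rightarrow> nat \<Rightarrow> int) \<Rightarrow> (nat \<Rightarrow> nat \<Rightarrow> int) \<Rightarrow> (nat \<Rightarrow> nat \<Rightarrow> int)" where
  "phi n g = restrict (act n g) (Z2mats n)"

lemma phi_Bij: assumes g: "g \<in> C6" shows "phi n g \<in> Bij (Z2mats n)"
proof -
  obtain y where y: "y \<in> C6" "mmul y g = mk 1 0 0 1" "mmul g y = mk 1 0 0 1" using C6_inv[OF g] by blast
  have "bij_betw (act n g) (Z2mats n) (Z2mats n)"
    by (rule bij_betw_byWitness[where f'="act n y"])
       (auto simp: act_comp y act_one act_closed)
  then have "bij_betw (phi n g) (Z2mats n) (Z2mats n)"
    unfolding phi_def by (rule iffD2[OF bij_betw_cong, rotated]) auto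
  then show ?thesis unfolding Bij_def phi_def by auto
qed

lemma group_action_G6: "group_action G6 (Z2mats n) (phi n)"
  unfolding group_action_def group_hom_def group_hom_axioms_def
proof (intro conjI)
  show "group G6" by (rule group_G6)
  show "group (BijGroup (Z2mats n))" by (rule group_BijGroup)
  show "phi n \<in> hom G6 (BijGroup (Z2mats n))"
  proof (rule homI)
    show "phi n x \<in> carrier (BijGroup (Z2mats n))" if "x \<in> carrier G6" for x
      using that phi_Bij by (simp add: G6_def BijGroup_def)
    show "phi n (x \<otimes>\<^bsub>G6\<^esub> y) = phi n x \<otimes>\<^bsub>BijGroup (Z2mats n)\<^esub> phi n y"
      if "x \<in> carrier G6" "y \<in> carrier G6" for x y
    proof -
      have b: "phi n x \<in> Bij (Z2mats n)" "phi n y \<in> Bij (Z2mats n)" using that phi_Bij by (auto simp: G6_def)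
      show ?thesis using b
        by (auto simp: G6_def BijGroup_def compose_def phi_def act_comp act_closed fun_eq_iff)
    qed
  qed
qed

lemma red_SL2Z: assumes g: "g \<in> SL2Z" shows "\<exists>c\<in>C6. act n g = act n c"
proof -
  define a b c d where "a = g 0 0 mod 2" "b = g 0 1 mod 2" "c = g 1 0 mod 2" "d = g 1 1 mod 2"
  have det: "g 0 0 * g 1 1 - g 0 1 * g 1 0 = 1" using g by (simp add: SL2Z_def)
  have "(a*d - b*c) mod 2 = (g 0 0 * g 1 1 - g 0 1 * g 1 0) mod 2"
  proof -
    have "(a*d - b*c) mod 2 = ((a*d) mod 2 - (b*c) mod 2) mod 2" by (rule mod_diff_eq[symmetric])
    also have "\<dots> = ((g 0 0 * g 1 1) mod 2 - (g 0 1 * g 1 0) mod 2) mod 2"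
      unfolding a_b_c_d_def by (simp only: mod_mult_eq)
    also have "\<dots> = (g 0 0 * g 1 1 - g 0 1 * g 1 0) mod 2" by (rule mod_diff_eq)
    finally show ?thesis .
  qed
  with det have dm: "(a*d - b*c) mod 2 = 1" by simp
  have ab: "a \<in> {0,1}" "b \<in> {0,1}" "c \<in> {0,1}" "d \<in> {0,1}" unfolding a_b_c_d_def by auto
  have inC: "mk a b c d \<in> C6" using ab dm unfolding C6_def by auto
  have "act n g = act n (mk a b c d)"
    by (rule act_cong_mod) (auto simp: mk_def a_b_c_d_def less_2_cases_iff)
  with inC show ?thesis by blast
qed

lemma mk_SL2Z: "a*d - b*c = 1 \<Longrightarrow> mk a b c d \<in> SL2Z"
  by (simp add: SL2Z_def mk_def)

lemma lift_C6: assumes c: "c \<in> C6" shows "\<exists>g\<in>SL2Z. act n g = act n c"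
proof -
  have "\<exists>a b c' d. a*d - b*c' = 1 \<and> act n (mk a b c' d) = act n c"
    using c unfolding C6_def
  proof (elim insertE emptyE)
    assume "c = mk 1 0 0 1" then show ?thesis by (intro exI[of _ 1] exI[of _ 0] exI[of _ 0] exI[of _ 1]) simp
  next
    assume "c = mk 0 1 1 0" then show ?thesis
      by (intro exI[of _ 0] exI[of _ 1] exI[of _ "-1"] exI[of _ 0]) (auto intro!: act_cong_mod simp: mk_def)
  next
    assume "c = mk 1 1 0 1" then show ?thesis by (intro exI[of _ 1] exI[of _ 1] exI[of _ 0] exI[of _ 1]) simp
  next
    assume "c = mk 1 0 1 1" then show ?thesis by (intro exI[of _ 1] exI[of _ 0] exI[of _ 1] exI[of _ 1]) simp
  next
    assume "c = mk 1 1 1 0" then show ?thesis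
      by (intro exI[of _ 1] exI[of _ 1] exI[of _ "-1"] exI[of _ 0]) (auto intro!: act_cong_mod simp: mk_def)
  next
    assume "c = mk 0 1 1 1" then show ?thesis
      by (intro exI[of _ 0] exI[of _ 1] exI[of _ "-1"] exI[of _ 1]) (auto intro!: act_cong_mod simp: mk_def)
  qed
  then show ?thesis using mk_SL2Z by blast
qed

lemma orbit_eq: assumes M: "M \<in> Z2mats n"
  shows "orbit_rel n `` {M} = orbit G6 (phi n) M"
proof
  show "orbit_rel n `` {M} \<subseteq> orbit G6 (phi n) M"
  proof
    fix N assume "N \<in> orbit_rel n `` {M}"
    then obtain g where g: "g \<in> SL2Z" "act n g M = N" by (auto simp: orbit_rel_def)
    obtain c where "c \<in> C6" "act n g = act n c" using red_SL2Z[OF g(1)] by blast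
    then show "N \<in> orbit G6 (phi n) M" using g M by (auto simp: orbit_def G6_def phi_def)
  qed
next
  show "orbit G6 (phi n) M \<subseteq> orbit_rel n `` {M}"
  proof
    fix N assume "N \<in> orbit G6 (phi n) M"
    then obtain c where c: "c \<in> C6" "N = act n c M" using M by (auto simp: orbit_def G6_def phi_def)
    obtain g where "g \<in> SL2Z" "act n g = act n c" using lift_C6[OF c(1)] by blast
    then have "act n g M = N" "g \<in> SL2Z" using c by auto
    then show "N \<in> orbit_rel n `` {M}" using M act_closed unfolding orbit_rel_def by blast
  qed
qed

lemma quotient_eq: "Z2mats n // orbit_rel n = orbits G6 (Z2mats n) (phi n)"
  unfolding quotient_def orbits_def using orbit_eq by auto


definition F :: "(nat \<Rightarrow> nat \<Rightarrow> int) \<Rightarrow> (int \<times> int) set" where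
  "F c = {(x,y). x \<in> {0,1} \<and> y \<in> {0,1} \<and> (c 0 0 * x + c 0 1 * y) mod 2 = x \<and> (c 1 0 * x + c 1 1 * y) mod 2 = y}"

lemma fix_char: assumes M: "M \<in> Z2mats n"
  shows "act n c M = M \<longleftrightarrow> (\<forall>j<n. (M 0 j, M 1 j) \<in> F c)"
proof
  assume H: "act n c M = M"
  show "\<forall>j<n. (M 0 j, M 1 j) \<in> F c"
  proof (intro allI impI)
    fix j assume j: "j < n"
    have "act n c M 0 j = M 0 j" "act n c M 1 j = M 1 j" using H by auto
    moreover have "M 0 j \<in> {0,1}" "M 1 j \<in> {0,1}" using Z2matsD(1)[OF M _ j] by auto
    ultimately show "(M 0 j, M 1 j) \<in> F c" using j by (simp add: act_def F_def sum2)
  qed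
next
  assume H: "\<forall>j<n. (M 0 j, M 1 j) \<in> F c"
  show "act n c M = M"
  proof (rule ext, rule ext)
    fix i j
    show "act n c M i j = M i j"
    proof (cases "i < 2 \<and> j < n")
      case True
      then have "i = 0 \<or> i = 1" by auto
      then show ?thesis using H True by (auto simp: act_def F_def sum2)
    qed (auto simp: act_def Z2matsD(2)[OF M])
  qed
qed

definition col :: "nat \<Rightarrow> (nat \<Rightarrow> nat \<Rightarrow> int) \<Rightarrow> nat \<Rightarrow> int \<times> int" where
  "col n M = (\<lambda>j\<in>{..<n}. (M 0 j, M 1 j))"

definition uncol :: "nat \<Rightarrow> (nat \<Rightarrow> int \<times> int) \<Rightarrow> nat \<Rightarrow> nat \<Rightarrow> int" where
  "uncol n f = (\<lambda>i j. if i < 2 \<and> j < n then (if i = 0 then fst (f j) else snd (f j)) else 0)"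

lemma bij_cols: assumes S: "S \<subseteq> {0,1} \<times> {0,1}"
  shows "bij_betw (col n) {M \<in> Z2mats n. \<forall>j<n. (M 0 j, M 1 j) \<in> S} ({..<n} \<rightarrow>\<^sub>E S)"
proof (rule bij_betw_byWitness[where f'="uncol n"])
  show "\<forall>a\<in>{M \<in> Z2mats n. \<forall>j<n. (M 0 j, M 1 j) \<in> S}. uncol n (col n a) = a"
  proof (intro ballI ext)
    fix a i j assume a: "a \<in> {M \<in> Z2mats n. \<forall>j<n. (M 0 j, M 1 j) \<in> S}"
    then have aZ: "a \<in> Z2mats n" by simp
    show "uncol n (col n a) i j = a i j"
    proof (cases "i < 2 \<and> j < n")
      case True
      then have "i = 0 \<or> i = 1" by auto
      then show ?thesis using True by (auto simp: uncol_def col_def)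
    next
      case False
      show ?thesis unfolding uncol_def by (subst if_not_P[OF False]) (simp add: Z2matsD(2)[OF aZ False])
    qed
  qed
  show "\<forall>f\<in>{..<n} \<rightarrow>\<^sub>E S. col n (uncol n f) = f"
  proof (intro ballI ext)
    fix f j assume f: "f \<in> {..<n} \<rightarrow>\<^sub>E S"
    show "col n (uncol n f) j = f j"
    proof (cases "j < n")
      case True
      have "col n (uncol n f) j = (uncol n f 0 j, uncol n f 1 j)" using True by (simp add: col_def)
      also have "\<dots> = (fst (f j), snd (f j))" using True by (simp add: uncol_def)
      also have "\<dots> = f j" by simp
      finally show ?thesis .
    next
      case False
      have fu: "f j = undefined" using PiE_arb[OF f] False by simp
      have "col n (uncol n f) j = undefined" using False by (simp add: col_def)
      then show ?thesis using fu by simp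
    qed
  qed
  show "col n ` {M \<in> Z2mats n. \<forall>j<n. (M 0 j, M 1 j) \<in> S} \<subseteq> {..<n} \<rightarrow>\<^sub>E S"
  proof
    fix g assume "g \<in> col n ` {M \<in> Z2mats n. \<forall>j<n. (M 0 j, M 1 j) \<in> S}"
    then obtain M where M: "\<forall>j<n. (M 0 j, M 1 j) \<in> S" and g: "g = col n M" by blast
    show "g \<in> {..<n} \<rightarrow>\<^sub>E S" unfolding g
    proof (rule PiE_I)
      show "col n M x \<in> S" if "x \<in> {..<n}" for x using that M by (simp add: col_def)
      show "col n M x = undefined" if "x \<notin> {..<n}" for x using that by (simp add: col_def)
    qed
  qed
  show "uncol n ` ({..<n} \<rightarrow>\<^sub>E S) \<subseteq> {M \<in> Z2mats n. \<forall>j<n. (M 0 j, M 1 j) \<in> S}"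
  proof
    fix M assume "M \<in> uncol n ` ({..<n} \<rightarrow>\<^sub>E S)"
    then obtain f where f: "f \<in> {..<n} \<rightarrow>\<^sub>E S" and M: "M = uncol n f" by blast
    have fj: "j < n \<Longrightarrow> f j \<in> S" for j using f by auto
    have fs: "j < n \<Longrightarrow> fst (f j) \<in> {0,1} \<and> snd (f j) \<in> {0,1}" for j using fj[of j] S by auto
    have 1: "\<forall>i j. i < 2 \<and> j < n \<longrightarrow> M i j \<in> {0,1}"
    proof (intro allI impI)
      fix i j :: nat assume ij: "i < 2 \<and> j < n"
      then have "i = 0 \<or> i = 1" by auto
      then show "M i j \<in> {0,1}" using ij fs[of j] by (auto simp: M uncol_def)
    qed
    have 2: "\<forall>i j. \<not> (i < 2 \<and> j < n) \<longrightarrow> M i j = 0" by (simp add: M uncol_def)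
    have 3: "\<forall>j<n. (M 0 j, M 1 j) \<in> S" using fj by (simp add: M uncol_def)
    show "M \<in> {M \<in> Z2mats n. \<forall>j<n. (M 0 j, M 1 j) \<in> S}" using 1 2 3 by (simp add: Z2mats_def)
  qed
qed

lemma F_sub: "F c \<subseteq> {0,1} \<times> {0,1}" by (auto simp: F_def)

lemma fixset_card: "card {M \<in> Z2mats n. act n c M = M} = card (F c) ^ n"
  and fixset_finite: "finite {M \<in> Z2mats n. act n c M = M}"
proof -
  have eq: "{M \<in> Z2mats n. act n c M = M} = {M \<in> Z2mats n. \<forall>j<n. (M 0 j, M 1 j) \<in> F c}"
    using fix_char by blast
  have fin: "finite (F c)" using F_sub by (rule finite_subset) auto
  have b: "bij_betw (col n) {M \<in> Z2mats n. act n c M = M} ({..<n} \<rightarrow>\<^sub>E F c)"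
    unfolding eq by (rule bij_cols[OF F_sub])
  show "card {M \<in> Z2mats n. act n c M = M} = card (F c) ^ n"
    using bij_betw_same_card[OF b] card_funcsetE[of "{..<n}" "F c"] by simp
  show "finite {M \<in> Z2mats n. act n c M = M}"
    using bij_betw_finite[OF b] finite_PiE[of "{..<n}" "\<lambda>_. F c"] fin by simp
qed

lemma Z2mats_finite: "finite (Z2mats n)"
proof -
  have "{M \<in> Z2mats n. act n (mk 1 0 0 1) M = M} = Z2mats n" using act_one by auto
  then show ?thesis using fixset_finite[of n "mk 1 0 0 1"] by simp
qed

lemma inv_card: "card (invariants (Z2mats n) (phi n) c) = card (F c) ^ n"
proof -
  have "invariants (Z2mats n) (phi n) c = {M \<in> Z2mats n. act n c M = M}"
    by (auto simp: invariants_def phi_def)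
  then show ?thesis using fixset_card by simp
qed

lemma mk_simps[simp]: "mk a b c d 0 0 = a" "mk a b c d 0 1 = b" "mk a b c d 1 0 = c" "mk a b c d 1 1 = d"
  by (simp_all add: mk_def)

lemma mk_simps'[simp]: "mk a b c d 0 (Suc 0) = b" "mk a b c d (Suc 0) 0 = c" "mk a b c d (Suc 0) (Suc 0) = d"
  by (simp_all add: mk_def)

lemma F_expl: "F c = set (filter (\<lambda>p. (c 0 0 * fst p + c 0 1 * snd p) mod 2 = fst p \<and> (c 1 0 * fst p + c 1 1 * snd p) mod 2 = snd p) [(0,0),(0,1),(1,0),(1,1)])"
  by (auto simp: F_def)

lemma F1: "F (mk 1 0 0 1) = {0,1} \<times> {0,1}" by (simp add: F_expl insert_commute)
lemma F2: "F (mk 0 1 1 0) = {(0,0),(1,1)}" by (simp add: F_expl insert_commute)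
lemma F3: "F (mk 1 1 0 1) = {(0,0),(1,0)}" by (simp add: F_expl insert_commute)
lemma F4: "F (mk 1 0 1 1) = {(0,0),(0,1)}" by (simp add: F_expl insert_commute)
lemma F5: "F (mk 1 1 1 0) = {(0,0)}" by (simp add: F_expl insert_commute)
lemma F6: "F (mk 0 1 1 1) = {(0,0)}" by (simp add: F_expl insert_commute)

lemma cF: "card (F (mk 1 0 0 1)) = 4" "card (F (mk 0 1 1 0)) = 2" "card (F (mk 1 1 0 1)) = 2"
  "card (F (mk 1 0 1 1)) = 2" "card (F (mk 1 1 1 0)) = 1" "card (F (mk 0 1 1 1)) = 1"
  by (simp_all add: F1 F2 F3 F4 F5 F6 card_cartesian_product)

lemma card_C6: "card C6 = 6" by (simp add: C6_def)

lemma sum_C6: "(\<Sum>c\<in>C6. card (invariants (Z2mats n) (phi n) c)) = 4^n + 3 * 2^n + 2"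
  unfolding C6_def by (simp add: inv_card cF)

lemma main_count: "card (Z2mats n // orbit_rel n) * 6 = 4^n + 3 * 2^n + 2"
proof -
  have "card (orbits G6 (Z2mats n) (phi n)) * order G6 = (\<Sum>g \<in> carrier G6. card(invariants (Z2mats n) (phi n) g))"
    by (rule group_action.burnside[OF group_action_G6]) (auto simp: G6_def C6_def Z2mats_finite)
  then show ?thesis using sum_C6 card_C6 quotient_eq by (simp add: order_def G6_def)
qed

theorem corollary4p4:
  fixes n :: nat
  assumes "n \<ge> 1"
  shows "real (r2 n) = (2 ^ n + 1 :: real) * (2 ^ (n - 1) + 1) / 3"
proof -
  obtain m where n: "n = Suc m" using assms by (cases n) auto
  have "real (r2 n) * 6 = 4^n + 3 * 2^n + 2"
    using main_count[of n] unfolding r2_def by (metis (mono_tags) of_nat_mult of_nat_numeral of_nat_add of_nat_power)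
  moreover have "(4::real)^m = (2^m)^2" by (simp add: power2_eq_square power_mult_distrib[symmetric])
  then have "(4::real)^n = 4 * (2^m)^2" unfolding n by simp
  ultimately show ?thesis unfolding n by (simp add: field_simps power2_eq_square)
qed

end
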